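(* Let $G=(V,E)$ be a graph and $X \subseteq V$ a set of vertices such that every vertex of $V \setminus X$ has degree at most $2$ in $G$. For all positive integers $\ell, p$: if there exists a set $S \subseteq V$ with $|S| \le p$ such that every connected component of $G - S$ has at most $\ell$ vertices, then there exists such a set $S$ (with $|S| \le p$ and all components of $G-S$ of size at most $\ell$) which additionally satisfies: for every cycle $C$ of $G$ with $C \cap X \neq \emptyset$, either $C \cap S = \emptyset$ or $C \cap X \cap S \neq \emptyset$.
   Context: Graphs are finite, simple and undirected; a cycle $C$ is identified with its vertex set when intersecting with vertex sets. *)

theory Defs
  imports Main
begin

definition simple_graph :: "'a set \<Rightarrow> 'a set set \<Rightarrow> bool" where
  "simple_graph V E \<longleftrightarrow> finite V \<and> (\<forall>e\<in>E. \<exists>u v. e = {u, v} \<and> u \<noteq> v \<and> u \<in> V \<and> v \<in> V)"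

definition degree :: "'a set set \<Rightarrow> 'a \<Rightarrow> nat" where
  "degree E v = card {e \<in> E. v \<in> e}"

definition adj_in :: "'a set set \<Rightarrow> 'a set \<Rightarrow> 'a \<Rightarrow> 'a \<Rightarrow> bool" where
  "adj_in E W u v \<longleftrightarrow> u \<in> W \<and> v \<in> W \<and> {u, v} \<in> E"

definition component :: "'a set set \<Rightarrow> 'a set \<Rightarrow> 'a \<Rightarrow> 'a set" where
  "component E W v = {u \<in> W. (adj_in E W)\<^sup>*\<^sup>* v u}"

definition small_components :: "'a set \<Rightarrow> 'a set set \<Rightarrow> 'a set \<Rightarrow> nat \<Rightarrow> bool" where
  "small_components V E S l \<longleftrightarrow> (\<forall>v \<in> V - S. card (component E (V - S) v) \<le> l)"

definition is_cycle :: "'a set \<Rightarrow> 'a set set \<Rightarrow> 'a list \<Rightarrow> bool" where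
  "is_cycle V E cs \<longleftrightarrow> length cs \<ge> 3 \<and> distinct cs \<and> set cs \<subseteq> V \<and>
     (\<forall>i < length cs. {cs ! i, cs ! ((i + 1) mod length cs)} \<in> E)"

end

theory Submission
  imports Defs
begin

lemma rtranclp_sym_helper:
  assumes sym: "\<And>x y. R x y \<Longrightarrow> R y x" and "R\<^sup>*\<^sup>* x y"
  shows "R\<^sup>*\<^sup>* y x"
  using assms(2)
proof (induction rule: rtranclp_induct)
  case base then show ?case by simp
next
  case (step y z)
  then show ?case using sym by (meson converse_rtranclp_into_rtranclp)
qed

lemma rot1: assumes "(d::nat) \<le> n" shows "((a + d) mod n + (n - d)) mod n = a mod n"
proof -
  have "((a + d) mod n + (n - d)) mod n = (a + d + (n - d)) mod n" by (rule mod_add_left_eq)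
  also have "a + d + (n - d) = a + n" using assms by simp
  finally show ?thesis by simp
qed
lemma rot2: assumes "(d::nat) \<le> n" shows "((a + (n - d)) mod n + d) mod n = a mod n"
proof -
  have "((a + (n - d)) mod n + d) mod n = (a + (n - d) + d) mod n" by (rule mod_add_left_eq)
  also have "a + (n - d) + d = a + n" using assms by simp
  finally show ?thesis by simp
qed
lemma rot3: "((a::nat) mod n + b) mod n = (a + b) mod n" by (rule mod_add_left_eq)

lemma swap_lemma:
  assumes sg: "simple_graph V E" and deg: "\<forall>v\<in>V-X. degree E v \<le> 2"
    and SV: "S \<subseteq> V" and sc: "small_components V E S l"
    and cyc: "is_cycle V E cs" and cx: "set cs \<inter> X \<noteq> {}"
    and csS: "set cs \<inter> S \<noteq> {}" and cxs: "set cs \<inter> X \<inter> S = {}"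
  shows "\<exists>S'. S' \<subseteq> V \<and> card S' = card S \<and> small_components V E S' l \<and> card (S' - X) < card (S - X)"
proof -
  define n where "n = length cs"
  have n3: "n \<ge> 3" and dist: "distinct cs" and csV: "set cs \<subseteq> V"
    and cedge: "\<And>i. i < n \<Longrightarrow> {cs ! i, cs ! ((i + 1) mod n)} \<in> E"
    using cyc unfolding is_cycle_def n_def by auto
  have finV: "finite V" using sg unfolding simple_graph_def by auto
  have finS: "finite S" using SV finV finite_subset by blast
  have EV: "E \<subseteq> Pow V" using sg unfolding simple_graph_def by auto
  have finE: "finite E" using EV finV by (meson finite_Pow_iff finite_subset)
  define P where "P = {i. i < n \<and> cs ! i \<in> S}"
  define D where "D = {k. 0 < k \<and> (\<exists>i\<in>P. cs ! ((i + k) mod n) \<in> X)}"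
  define d where "d = (LEAST k. k \<in> D)"
  obtain i1 where i1: "i1 < n" "cs ! i1 \<in> S" using csS by (auto simp: in_set_conv_nth n_def)
  obtain j1 where j1: "j1 < n" "cs ! j1 \<in> X" using cx by (auto simp: in_set_conv_nth n_def)
  have i1X: "cs ! i1 \<notin> X" using cxs i1 unfolding n_def by (metis IntI empty_iff nth_mem)
  define k1 where "k1 = (j1 + n - i1) mod n"
  have k1D: "k1 \<in> D"
  proof -
    have "(i1 + k1) mod n = (i1 + (j1 + n - i1)) mod n" unfolding k1_def by (simp add: mod_add_right_eq)
    also have "i1 + (j1 + n - i1) = j1 + n" using i1 by simp
    finally have "(i1 + k1) mod n = j1" using j1 by simp
    moreover have "k1 \<noteq> 0"
    proof
      assume "k1 = 0"
      then have "(i1 + k1) mod n = i1" using i1 by simp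
      with \<open>(i1 + k1) mod n = j1\<close> i1X j1 show False by simp
    qed
    ultimately show ?thesis using i1 j1 unfolding D_def P_def by auto
  qed
  have dD: "d \<in> D" unfolding d_def using k1D by (rule LeastI)
  have dle: "d \<le> k1" unfolding d_def using k1D by (rule Least_le)
  have "k1 < n" unfolding k1_def using n3 by simp
  then have dn: "d < n" using dle by simp
  have d0: "0 < d" using dD unfolding D_def by auto
  obtain i0 where i0: "i0 < n" "cs ! i0 \<in> S" "cs ! ((i0 + d) mod n) \<in> X"
    using dD unfolding D_def P_def by auto
  have dmin: "\<And>i k. i < n \<Longrightarrow> cs ! i \<in> S \<Longrightarrow> 0 < k \<Longrightarrow> k < d \<Longrightarrow> cs ! ((i + k) mod n) \<notin> X"
  proof -
    fix i k assume "i < n" "cs ! i \<in> S" "0 < k" "k < d"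
    show "cs ! ((i + k) mod n) \<notin> X"
    proof
      assume "cs ! ((i + k) mod n) \<in> X"
      then have "k \<in> D" unfolding D_def P_def using \<open>i < n\<close> \<open>cs ! i \<in> S\<close> \<open>0 < k\<close> by auto
      then have "d \<le> k" unfolding d_def by (rule Least_le)
      with \<open>k < d\<close> show False by simp
    qed
  qed
  define idx where "idx u = (THE i. i < n \<and> cs ! i = u)" for u
  have idx_nth: "\<And>i. i < n \<Longrightarrow> idx (cs ! i) = i"
    unfolding idx_def using dist by (auto simp: n_def nth_eq_iff_index_eq intro!: the_equality)
  define g where "g u = (if u \<in> set cs then cs ! ((idx u + d) mod n) else u)" for u
  define f where "f u = (if u \<in> set cs then cs ! ((idx u + (n - d)) mod n) else u)" for u
  have n0: "0 < n" using n3 by simp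
  have g_nth: "\<And>i. i < n \<Longrightarrow> g (cs ! i) = cs ! ((i + d) mod n)"
    unfolding g_def using idx_nth by (auto simp: n_def)
  have f_nth: "\<And>i. i < n \<Longrightarrow> f (cs ! i) = cs ! ((i + (n - d)) mod n)"
    unfolding f_def using idx_nth by (auto simp: n_def)
  have g_out: "\<And>u. u \<notin> set cs \<Longrightarrow> g u = u" unfolding g_def by simp
  have f_out: "\<And>u. u \<notin> set cs \<Longrightarrow> f u = u" unfolding f_def by simp
  have gf: "g (f u) = u" for u
  proof (cases "u \<in> set cs")
    case True
    then obtain i where i: "i < n" "u = cs ! i" by (auto simp: in_set_conv_nth n_def)
    have "(i + (n - d)) mod n < n" using n0 by simp
    then have "g (f u) = cs ! (((i + (n - d)) mod n + d) mod n)" using i f_nth g_nth by simp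
    also have "((i + (n - d)) mod n + d) mod n = i"
      using rot2[of d n i] dn i by (metis less_imp_le mod_less)
    finally show ?thesis using i by simp
  next
    case False then show ?thesis using f_out g_out by simp
  qed
  have fg: "f (g u) = u" for u
  proof (cases "u \<in> set cs")
    case True
    then obtain i where i: "i < n" "u = cs ! i" by (auto simp: in_set_conv_nth n_def)
    have "(i + d) mod n < n" using n0 by simp
    then have "f (g u) = cs ! (((i + d) mod n + (n - d)) mod n)" using i f_nth g_nth by simp
    also have "((i + d) mod n + (n - d)) mod n = i"
      using rot1[of d n i] dn i by (metis less_imp_le mod_less)
    finally show ?thesis using i by simp
  next
    case False then show ?thesis using f_out g_out by simp
  qed
  have fV: "\<And>u. u \<in> V \<Longrightarrow> f u \<in> V"
    using csV n0 by (auto simp: f_def n_def)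
  have gV: "\<And>u. u \<in> V \<Longrightarrow> g u \<in> V"
    using csV n0 by (auto simp: g_def n_def)
  define S' where "S' = g ` S"
  have injg: "inj g" by (metis fg injI)
  have injf: "inj f" by (metis gf injI)
  have S'V: "S' \<subseteq> V" unfolding S'_def using SV gV by auto
  have cardS': "card S' = card S" unfolding S'_def using injg by (simp add: card_image inj_on_subset)
  have fnotS: "\<And>u. u \<notin> S' \<Longrightarrow> f u \<notin> S"
    unfolding S'_def by (metis gf image_eqI)
  define R where "R = adj_in E (V - S)"
  have Rsym: "\<And>x y. R x y \<Longrightarrow> R y x" unfolding R_def adj_in_def by (auto simp: insert_commute)
  have nthinj: "\<And>i j. i < n \<Longrightarrow> j < n \<Longrightarrow> cs ! i = cs ! j \<Longrightarrow> i = j"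
    using dist nth_eq_iff_index_eq unfolding n_def by blast
  have Rs: "R\<^sup>*\<^sup>* y x" if "R\<^sup>*\<^sup>* x y" for x y
    using rtranclp_sym_helper[where R=R] Rsym that by blast
  have path: "(\<forall>j\<le>k. cs ! ((i + j) mod n) \<notin> S) \<Longrightarrow> R\<^sup>*\<^sup>* (cs ! (i mod n)) (cs ! ((i + k) mod n))" for i k
  proof (induction k)
    case 0 then show ?case by simp
  next
    case (Suc k)
    have a: "R\<^sup>*\<^sup>* (cs ! (i mod n)) (cs ! ((i + k) mod n))" using Suc by auto
    have e: "{cs ! ((i + k) mod n), cs ! (((i + k) mod n + 1) mod n)} \<in> E"
      using cedge n0 by simp
    have "((i + k) mod n + 1) mod n = (i + Suc k) mod n" by (simp add: mod_Suc_eq)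
    with e have e': "{cs ! ((i + k) mod n), cs ! ((i + Suc k) mod n)} \<in> E" by simp
    have m1: "cs ! ((i + k) mod n) \<notin> S" using Suc.prems by simp
    have m2: "cs ! ((i + Suc k) mod n) \<notin> S" using Suc.prems by blast
    have v1: "cs ! ((i + k) mod n) \<in> V" using csV n0 by (simp add: n_def subset_iff)
    have v2: "cs ! ((i + Suc k) mod n) \<in> V" using csV n0 by (simp add: n_def subset_iff)
    have "R (cs ! ((i + k) mod n)) (cs ! ((i + Suc k) mod n))"
      unfolding R_def adj_in_def using e' m1 m2 v1 v2 by simp
    with a show ?case by simp
  qed
  have anchored: "u \<notin> S \<and> R\<^sup>*\<^sup>* (f u) u" if u: "u \<in> V - S'" "u \<notin> set cs \<or> u \<in> X" for u
  proof (cases "u \<in> set cs")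
    case False
    then have "u \<notin> S" using u unfolding S'_def using g_out by force
    then show ?thesis using False f_out by simp
  next
    case True
    then have uX: "u \<in> X" using u by simp
    from True obtain q where q: "q < n" "u = cs ! q" by (auto simp: in_set_conv_nth n_def)
    have uS: "u \<notin> S" using cxs True uX by auto
    define a where "a = (q + (n - d)) mod n"
    have an: "a < n" unfolding a_def using n0 by simp
    have fu: "f u = cs ! a" unfolding a_def using q f_nth by simp
    have ad: "(a + d) mod n = q" unfolding a_def using rot2[of d n q] dn q by (metis less_imp_le mod_less)
    have "\<forall>j\<le>d. cs ! ((a + j) mod n) \<notin> S"
    proof (intro allI impI)
      fix j assume jd: "j \<le> d"
      show "cs ! ((a + j) mod n) \<notin> S"
      proof
        assume inS: "cs ! ((a + j) mod n) \<in> S"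
        consider "j = d" | "j = 0" | "0 < j \<and> j < d" using jd by linarith
        then show False
        proof cases
          case 1 then show False using inS ad q uS by simp
        next
          case 2 then show False using inS an fu fnotS[of u] u by auto
        next
          case 3
          have bn: "(a + j) mod n < n" using n0 by simp
          have "cs ! (((a + j) mod n + (d - j)) mod n) \<notin> X"
            using dmin[OF bn inS, of "d - j"] 3 by auto
          moreover have "((a + j) mod n + (d - j)) mod n = q"
          proof -
            have "((a + j) mod n + (d - j)) mod n = (a + j + (d - j)) mod n" by (rule rot3)
            also have "a + j + (d - j) = a + d" using 3 by simp
            finally show ?thesis using ad by simp
          qed
          ultimately show False using uX q by simp
        qed
      qed
    qed
    from path[OF this] show ?thesis using an ad fu q uS by simp
  qed
  have cedgeR: "R (f (cs ! r)) (f (cs ! ((r + 1) mod n)))"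
    if r: "r < n" "cs ! r \<in> V - S'" "cs ! ((r + 1) mod n) \<in> V - S'" for r
  proof -
    define c where "c = (r + (n - d)) mod n"
    have cn: "c < n" unfolding c_def using n0 by simp
    have f1: "f (cs ! r) = cs ! c" unfolding c_def using r f_nth by simp
    have "f (cs ! ((r + 1) mod n)) = cs ! (((r + 1) mod n + (n - d)) mod n)" using f_nth n0 by simp
    also have "((r + 1) mod n + (n - d)) mod n = (c + 1) mod n"
    proof -
      have "((r + 1) mod n + (n - d)) mod n = (r + 1 + (n - d)) mod n" by (rule rot3)
      moreover have "(c + 1) mod n = (r + (n - d) + 1) mod n" unfolding c_def by (rule rot3)
      moreover have "r + 1 + (n - d) = r + (n - d) + 1" by simp
      ultimately show ?thesis by simp
    qed
    finally have f2: "f (cs ! ((r + 1) mod n)) = cs ! ((c + 1) mod n)" .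
    have "f (cs ! r) \<in> V - S" using r fV fnotS by auto
    moreover have "f (cs ! ((r + 1) mod n)) \<in> V - S" using r fV fnotS by auto
    ultimately show ?thesis unfolding R_def adj_in_def using f1 f2 cedge[OF cn] by simp
  qed
  have nonanch: "R\<^sup>*\<^sup>* (f u) (f w)"
    if uw: "u \<in> V - S'" "w \<in> V - S'" "{u, w} \<in> E" and q: "q < n" "u = cs ! q" and uX: "u \<notin> X" for u w q
  proof -
    define a where "a = cs ! ((q + 1) mod n)"
    define b where "b = cs ! ((q + (n - 1)) mod n)"
    have bn: "(q + (n - 1)) mod n < n" using n0 by simp
    have n1: "1 \<le> n" using n0 by simp
    have bsuc: "((q + (n - 1)) mod n + 1) mod n = q" using rot2[OF n1, of q] q by simp
    have ea: "{u, a} \<in> E" unfolding a_def using cedge q by simp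
    have eb: "{b, u} \<in> E" unfolding b_def using cedge[OF bn] bsuc q by simp
    have ha: "(q + 1) mod n = (if q + 1 = n then 0 else q + 1)" using q by auto
    have hb: "(q + (n - 1)) mod n = (if q = 0 then n - 1 else q - 1)"
    proof (cases "q = 0")
      case True then show ?thesis using n0 by simp
    next
      case False
      then have "q + (n - 1) = (q - 1) + n" using n0 by simp
      then have "(q + (n - 1)) mod n = (q - 1) mod n" by simp
      then show ?thesis using False q by simp
    qed
    have dq: "(q + 1) mod n \<noteq> (q + (n - 1)) mod n" "(q + 1) mod n \<noteq> q" "(q + (n - 1)) mod n \<noteq> q"
      unfolding ha hb using q n3 by auto
    have an: "(q + 1) mod n < n" using n0 by simp
    have ab1: "a \<noteq> b"
    proof
      assume "a = b"
      then have "(q + 1) mod n = (q + (n - 1)) mod n" using nthinj[OF an bn] unfolding a_def b_def by simp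
      with dq show False by simp
    qed
    have ab2: "a \<noteq> u"
    proof
      assume "a = u"
      then have "(q + 1) mod n = q" using nthinj[OF an q(1)] q(2) unfolding a_def by simp
      with dq show False by simp
    qed
    have ab3: "b \<noteq> u"
    proof
      assume "b = u"
      then have "(q + (n - 1)) mod n = q" using nthinj[OF bn q(1)] q(2) unfolding b_def by simp
      with dq show False by simp
    qed
    note ab = ab1 ab2 ab3
    have wu: "w \<noteq> u"
    proof
      assume "w = u"
      then have "{u} \<in> E" using uw by simp
      then obtain x y where xy: "{u} = {x, y}" "x \<noteq> y" using sg unfolding simple_graph_def by blast
      have "x \<in> {u}" "y \<in> {u}" using xy(1) by auto
      then show False using xy(2) by simp
    qed
    have "w = a \<or> w = b"
    proof (rule ccontr)
      assume nab: "\<not> (w = a \<or> w = b)"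
      have "{{u, a}, {b, u}, {u, w}} \<subseteq> {e \<in> E. u \<in> e}" using ea eb uw by auto
      moreover have "card {{u, a}, {b, u}, {u, w}} = 3"
        using ab nab wu by (auto simp add: doubleton_eq_iff card_insert_if)
      moreover have "finite {e \<in> E. u \<in> e}" using finE by simp
      ultimately have "3 \<le> degree E u" unfolding degree_def by (metis card_mono)
      moreover have "u \<in> V" using uw by simp
      moreover have "degree E u \<le> 2" using deg uX \<open>u \<in> V\<close> by blast
      ultimately show False by linarith
    qed
    then show ?thesis
    proof
      assume "w = a"
      then have "R (f u) (f w)" using cedgeR[OF q(1)] uw q unfolding a_def by simp
      then show ?thesis by simp
    next
      assume "w = b"
      then have "R (f w) (f u)" using cedgeR[OF bn] uw q bsuc unfolding b_def by simp
      then show ?thesis using Rsym by blast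
    qed
  qed
  have edge: "R\<^sup>*\<^sup>* (f u) (f w)" if e: "adj_in E (V - S') u w" for u w
  proof -
    have uw: "u \<in> V - S'" "w \<in> V - S'" "{u, w} \<in> E" "{w, u} \<in> E"
      using e unfolding adj_in_def by (auto simp: insert_commute)
    show ?thesis
    proof (cases "u \<in> set cs \<and> u \<notin> X")
      case True
      then obtain q where "q < n" "u = cs ! q" by (auto simp: in_set_conv_nth n_def)
      then show ?thesis using nonanch[OF uw(1,2,3)] True by blast
    next
      case F1: False
      show ?thesis
      proof (cases "w \<in> set cs \<and> w \<notin> X")
        case True
        then obtain q where "q < n" "w = cs ! q" by (auto simp: in_set_conv_nth n_def)
        then have "R\<^sup>*\<^sup>* (f w) (f u)" using nonanch[OF uw(2,1,4)] True by blast
        then show ?thesis using Rs by blast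
      next
        case False
        have au: "u \<notin> S" "R\<^sup>*\<^sup>* (f u) u" using anchored[OF uw(1)] F1 by auto
        have aw: "w \<notin> S" "R\<^sup>*\<^sup>* (f w) w" using anchored[OF uw(2)] False by auto
        have "R u w" unfolding R_def adj_in_def using au aw uw by auto
        then have "R\<^sup>*\<^sup>* (f u) w" using au by (meson rtranclp.rtrancl_into_rtrancl)
        moreover have "R\<^sup>*\<^sup>* w (f w)" using aw Rs by blast
        ultimately show ?thesis by simp
      qed
    qed
  qed
  have small': "small_components V E S' l"
    unfolding small_components_def
  proof
    fix v assume v: "v \<in> V - S'"
    have fv: "f v \<in> V - S" using v fV fnotS by auto
    have sub: "f ` component E (V - S') v \<subseteq> component E (V - S) (f v)"
    proof
      fix y assume "y \<in> f ` component E (V - S') v"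
      then obtain u where u: "u \<in> V - S'" "(adj_in E (V - S'))\<^sup>*\<^sup>* v u" "y = f u"
        unfolding component_def by auto
      have "R\<^sup>*\<^sup>* (f v) (f u)" using u(2)
      proof (induction rule: rtranclp_induct)
        case base then show ?case by simp
      next
        case (step y z) then show ?case using edge by (meson rtranclp_trans)
      qed
      moreover have "f u \<in> V - S" using u fV fnotS by auto
      ultimately show "y \<in> component E (V - S) (f v)" unfolding component_def R_def using u by auto
    qed
    have "card (component E (V - S') v) = card (f ` component E (V - S') v)"
      using injf by (simp add: card_image inj_on_subset)
    also have "\<dots> \<le> card (component E (V - S) (f v))"
      using sub finV by (intro card_mono) (auto simp: component_def)
    also have "\<dots> \<le> l" using sc fv unfolding small_components_def by auto
    finally show "card (component E (V - S') v) \<le> l" .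
  qed
  have SX: "S \<inter> X \<subseteq> S' \<inter> X"
  proof
    fix u assume u: "u \<in> S \<inter> X"
    then have "u \<notin> set cs" using cxs by auto
    then show "u \<in> S' \<inter> X" unfolding S'_def using u g_out by force
  qed
  have gi0: "g (cs ! i0) = cs ! ((i0 + d) mod n)" using g_nth i0 by simp
  have inset: "cs ! ((i0 + d) mod n) \<in> set cs" using n0 by (simp add: n_def)
  have new: "g (cs ! i0) \<in> S' \<inter> X" "g (cs ! i0) \<notin> S \<inter> X"
    subgoal unfolding S'_def using i0 gi0 by (metis IntI imageI)
    subgoal using gi0 inset cxs i0 by auto
    done
  have finS': "finite S'" unfolding S'_def using finS by simp
  have lt: "card (S \<inter> X) < card (S' \<inter> X)"
    using SX new finS' by (metis psubset_card_mono finite_Int psubsetI)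
  have "card (S' - X) = card S' - card (S' \<inter> X)"
    using finS' by (simp add: card_Diff_subset_Int)
  moreover have "card (S - X) = card S - card (S \<inter> X)"
    using finS by (simp add: card_Diff_subset_Int)
  moreover have "card (S' \<inter> X) \<le> card S'" using finS' by (simp add: card_mono)
  ultimately have "card (S' - X) < card (S - X)" using lt cardS' by linarith
  then show ?thesis using S'V cardS' small' by blast
qed

theorem lemma9:
  fixes V :: "'a set" and E :: "'a set set" and X :: "'a set" and l p :: nat
  assumes "simple_graph V E"
    and "X \<subseteq> V"
    and "\<forall>v \<in> V - X. degree E v \<le> 2"
    and "l \<ge> 1" and "p \<ge> 1"
    and "\<exists>S. S \<subseteq> V \<and> card S \<le> p \<and> small_components V E S l"
  shows "\<exists>S. S \<subseteq> V \<and> card S \<le> p \<and> small_components V E S l \<and>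
           (\<forall>cs. is_cycle V E cs \<and> set cs \<inter> X \<noteq> {} \<longrightarrow>
                 set cs \<inter> S = {} \<or> set cs \<inter> X \<inter> S \<noteq> {})"
proof -
  obtain S0 where "S0 \<subseteq> V \<and> card S0 \<le> p \<and> small_components V E S0 l" using assms(6) by blast
  then obtain S where S: "S \<subseteq> V" "card S \<le> p" "small_components V E S l"
    and minS: "\<And>T. T \<subseteq> V \<and> card T \<le> p \<and> small_components V E T l \<Longrightarrow> card (S - X) \<le> card (T - X)"
    using ex_has_least_nat[of "\<lambda>T. T \<subseteq> V \<and> card T \<le> p \<and> small_components V E T l" S0 "\<lambda>T. card (T - X)"]
    by blast
  have "\<forall>cs. is_cycle V E cs \<and> set cs \<inter> X \<noteq> {} \<longrightarrow> set cs \<inter> S = {} \<or> set cs \<inter> X \<inter> S \<noteq> {}"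
  proof (intro allI impI)
    fix cs assume c: "is_cycle V E cs \<and> set cs \<inter> X \<noteq> {}"
    show "set cs \<inter> S = {} \<or> set cs \<inter> X \<inter> S \<noteq> {}"
    proof (rule ccontr)
      assume "\<not> (set cs \<inter> S = {} \<or> set cs \<inter> X \<inter> S \<noteq> {})"
      then have a: "set cs \<inter> S \<noteq> {}" "set cs \<inter> X \<inter> S = {}" by auto
      obtain S' where S': "S' \<subseteq> V" "card S' = card S" "small_components V E S' l" "card (S' - X) < card (S - X)"
        using swap_lemma[OF assms(1) assms(3) S(1) S(3)] c a by blast
      have "card (S - X) \<le> card (S' - X)" using minS S' S(2) by simp
      with S'(4) show False by simp
    qed
  qed
  then show ?thesis using S by blast
qed

end
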